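(* Let $K\ge1$ and let $\omega\in\mathbb{T}$ be irrational with $\beta(\omega)>40K$. Then for every $\theta\in\mathbb{T}$, $H_{K,\theta,\omega}$ has no eigenvalues in $[0,4e^{K\|f\|_\infty}]$.
   Context: $\mathbb{T}=\mathbb{R}/\mathbb{Z}$. $f:\mathbb{T}\to\mathbb{R}$ is a non-constant real-analytic function with zero mean and $\|f\|_{C^1}=1$. $V(\theta)=\exp(Kf(\theta+\omega))+\exp(-Kf(\theta))$, and $(H_{K,\theta,\omega}u)_n=-u_{n+1}-u_{n-1}+V(\theta+n\omega)u_n$ on $\ell^2(\mathbb{Z})$. For irrational $\omega$ with continued fraction approximants $p_n/q_n$, $\beta(\omega)=\limsup_n\frac{\log q_{n+1}}{q_n}$. *)

theory Defs
  imports "HOL-Analysis.Analysis" "HOL-Library.Extended_Real"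
begin

text \<open>Functions on the torus T = R/Z are represented as 1-periodic functions R -> R.\<close>

definition periodic1 :: "(real \<Rightarrow> real) \<Rightarrow> bool" where
  "periodic1 f \<longleftrightarrow> (\<forall>x. f (x + 1) = f x)"

definition real_analytic :: "(real \<Rightarrow> real) \<Rightarrow> bool" where
  "real_analytic f \<longleftrightarrow>
     (\<forall>x. \<exists>r>0. \<exists>a::nat \<Rightarrow> real. \<forall>y. \<bar>y - x\<bar> < r \<longrightarrow> (\<lambda>n. a n * (y - x) ^ n) sums f y)"

definition sup_norm :: "(real \<Rightarrow> real) \<Rightarrow> real" where
  "sup_norm f = (SUP x. \<bar>f x\<bar>)"

definition C1_norm :: "(real \<Rightarrow> real) \<Rightarrow> real" where
  "C1_norm f = sup_norm f + sup_norm (deriv f)"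

text \<open>Continued fraction expansion: complete quotients, partial quotients,
  and denominators q_n of the convergents p_n/q_n (q_0 = 1, q_1 = a_1,
  q_{n+2} = a_{n+2} q_{n+1} + q_n).\<close>
fun cf_rem :: "real \<Rightarrow> nat \<Rightarrow> real" where
  "cf_rem x 0 = x"
| "cf_rem x (Suc n) = 1 / frac (cf_rem x n)"

definition cf_a :: "real \<Rightarrow> nat \<Rightarrow> int" where
  "cf_a x n = \<lfloor>cf_rem x n\<rfloor>"

fun cf_q :: "real \<Rightarrow> nat \<Rightarrow> int" where
  "cf_q x 0 = 1"
| "cf_q x (Suc 0) = cf_a x 1"
| "cf_q x (Suc (Suc n)) = cf_a x (Suc (Suc n)) * cf_q x (Suc n) + cf_q x n"

definition beta_exp :: "real \<Rightarrow> ereal" where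
  "beta_exp \<omega> = limsup (\<lambda>n. ereal (ln (real_of_int (cf_q \<omega> (Suc n))) / real_of_int (cf_q \<omega> n)))"

definition potential :: "real \<Rightarrow> (real \<Rightarrow> real) \<Rightarrow> real \<Rightarrow> real \<Rightarrow> real" where
  "potential K f \<omega> \<theta> = exp (K * f (\<theta> + \<omega>)) + exp (- K * f \<theta>)"

definition is_eigenvalue_H :: "real \<Rightarrow> (real \<Rightarrow> real) \<Rightarrow> real \<Rightarrow> real \<Rightarrow> real \<Rightarrow> bool" where
  "is_eigenvalue_H K f \<theta> \<omega> E \<longleftrightarrow>
     (\<exists>u :: int \<Rightarrow> complex. u \<noteq> (\<lambda>_. 0) \<and> (\<lambda>n. (norm (u n))\<^sup>2) summable_on UNIV \<and>
        (\<forall>n. - u (n + 1) - u (n - 1) + complex_of_real (potential K f \<omega> (\<theta> + real_of_int n * \<omega>)) * u n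
              = complex_of_real E * u n))"

end

theory Submission
  imports Defs
begin


lemma analytic_local:
  assumes "real_analytic f"
  shows "\<exists>r>0. \<exists>g'. (\<forall>y. \<bar>y - x\<bar> < r \<longrightarrow> (f has_real_derivative g' y) (at y)) \<and> isCont g' x"
proof -
  obtain r a where r: "r > 0" and sa: "\<And>y. \<bar>y - x\<bar> < r \<Longrightarrow> (\<lambda>n. a n * (y - x) ^ n) sums f y"
    using assms unfolding real_analytic_def by blast
  define g where "g h = (\<Sum>n. a n * h ^ n)" for h :: real
  define g' where "g' h = (\<Sum>n. diffs a n * h ^ n)" for h :: real
  have sm: "summable (\<lambda>n. a n * h ^ n)" if "norm h < r" for h
  proof -
    have "\<bar>x + h - x\<bar> < r" using that by simp
    from sa[OF this] have "(\<lambda>n. a n * h ^ n) sums f (x + h)" by simp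
    then show ?thesis by (rule sums_summable)
  qed
  have fg: "f y = g (y - x)" if "\<bar>y - x\<bar> < r" for y
    using sums_unique[OF sa[OF that]] unfolding g_def by simp
  have dg: "(g has_real_derivative g' h) (at h)" if "norm h < r" for h
    unfolding g_def g'_def by (rule termdiffs_strong'[of r, OF sm that])
  have df: "(f has_real_derivative g' (y - x)) (at y)" if "\<bar>y - x\<bar> < r" for y
  proof -
    have "((\<lambda>y. g (y - x)) has_real_derivative g' (y - x)) (at y)"
    proof -
      have d1: "(g has_real_derivative g' (y - x)) (at ((\<lambda>y. y - x) y))" using dg[of "y - x"] that by auto
      have d2: "((\<lambda>y. y - x) has_real_derivative 1) (at y)" by (auto intro!: derivative_eq_intros)
      show ?thesis using DERIV_chain2[OF d1 d2] by simp
    qed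
    then show ?thesis
    proof (rule has_field_derivative_transform_within_open[where S = "ball x r"])
      show "y \<in> ball x r" using that by (simp add: dist_real_def abs_minus_commute)
      fix z assume "z \<in> ball x r"
      hence "\<bar>z - x\<bar> < r" by (simp add: dist_real_def abs_minus_commute)
      then show "g (z - x) = f z" using fg by simp
    qed simp
  qed
  have smd: "summable (\<lambda>n. diffs a n * (r/2) ^ n)"
    by (rule termdiff_converges[of _ r]) (use r sm in auto)
  have "isCont g' 0"
    unfolding g'_def by (rule isCont_powser[OF smd]) (use r in auto)
  hence "isCont (\<lambda>y. g' (y - x)) x"
  proof -
    have "isCont (\<lambda>y. y - x) x" by (intro continuous_intros)
    moreover have "isCont g' ((\<lambda>y. y - x) x)" using \<open>isCont g' 0\<close> by simp
    ultimately show ?thesis by (rule isCont_o2)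
  qed
  then show ?thesis using r df by (intro exI[of _ r] conjI exI[of _ "\<lambda>y. g' (y - x)"]) auto
qed

lemma analytic_C1:
  assumes "real_analytic f"
  shows "(f has_real_derivative deriv f x) (at x)" "isCont (deriv f) x"
proof -
  obtain r g' where r: "r > 0" and d: "\<And>y. \<bar>y - x\<bar> < r \<Longrightarrow> (f has_real_derivative g' y) (at y)"
    and c: "isCont g' x" using analytic_local[OF assms, of x] by blast
  show "(f has_real_derivative deriv f x) (at x)" proof -
    have "(f has_real_derivative g' x) (at x)" using d[of x] r by auto
    with DERIV_imp_deriv[OF this] show ?thesis by simp
  qed
  have "continuous (at x within UNIV) (deriv f)"
  proof (rule continuous_transform_within[where f=g' and \<delta>=r and s=UNIV])
    show "continuous (at x within UNIV) g'" using c by simp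
    fix y :: real assume "dist y x < r"
    hence "\<bar>y - x\<bar> < r" by (simp add: dist_real_def)
    from DERIV_imp_deriv[OF d[OF this]] show "g' y = deriv f y" by simp
  qed (use r in simp_all)
  then show "isCont (deriv f) x" by simp
qed



lemma periodic_int:
  assumes "periodic1 g" shows "g (x + real_of_int n) = g x"
proof (induction n arbitrary: x rule: int_induct[where k=0])
  case base then show ?case by simp
next
  case (step1 i)
  have "g (x + real_of_int (i + 1)) = g ((x + real_of_int i) + 1)" by (simp add: add.assoc)
  also have "\<dots> = g (x + real_of_int i)" using assms unfolding periodic1_def by blast
  finally show ?case using step1 by simp
next
  case (step2 i)
  have "g (x + real_of_int (i - 1)) = g (x + real_of_int (i - 1) + 1)"
    using spec[OF assms[unfolded periodic1_def], of "x + real_of_int (i - 1)"] by simp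
  also have "\<dots> = g (x + real_of_int i)" by (simp add: algebra_simps)
  finally have "g (x + real_of_int (i - 1)) = g (x + real_of_int i)" .
  then show ?case using step2 by simp
qed

lemma periodic_bounded:
  assumes "periodic1 g" "\<And>x. isCont g x"
  shows "\<exists>M. \<forall>x. \<bar>g x\<bar> \<le> M"
proof -
  have "compact (g ` {0..1})"
    by (rule compact_continuous_image) (use assms(2) in \<open>auto intro: continuous_at_imp_continuous_on\<close>)
  then have "bounded (g ` {0..1})" by (rule compact_imp_bounded)
  then obtain M where M: "\<And>y. y \<in> g ` {0..1} \<Longrightarrow> norm y \<le> M"
    unfolding bounded_iff by blast
  have "\<bar>g x\<bar> \<le> M" for x
  proof -
    have "g x = g ((x - real_of_int \<lfloor>x\<rfloor>) + real_of_int \<lfloor>x\<rfloor>)" by simp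
    also have "\<dots> = g (x - real_of_int \<lfloor>x\<rfloor>)" by (rule periodic_int[OF assms(1)])
    moreover have "x - real_of_int \<lfloor>x\<rfloor> \<in> {0..1}"
      using frac_lt_1[of x] frac_ge_0[of x] by (simp add: frac_def)
    ultimately show ?thesis using M[of "g (x - real_of_int \<lfloor>x\<rfloor>)"] by auto
  qed
  then show ?thesis by blast
qed

lemma deriv_periodic:
  assumes "periodic1 f" "\<And>x. (f has_real_derivative deriv f x) (at x)"
  shows "periodic1 (deriv f)"
  unfolding periodic1_def
proof
  fix x
  have d1: "(f has_real_derivative deriv f (x+1)) (at ((\<lambda>y. y + 1) x))" using assms(2) by simp
  have d2: "((\<lambda>y. y + 1) has_real_derivative 1) (at x)" by (auto intro!: derivative_eq_intros)
  have "((\<lambda>y. f (y + 1)) has_real_derivative deriv f (x+1)) (at x)" using DERIV_chain2[OF d1 d2] by simp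
  moreover have "(\<lambda>y. f (y + 1)) = f" using assms(1) unfolding periodic1_def by auto
  ultimately show "deriv f (x + 1) = deriv f x" using DERIV_imp_deriv by metis
qed

lemma f_props:
  assumes per: "periodic1 f" and an: "real_analytic f" and n1: "C1_norm f = 1"
  shows "\<And>x. \<bar>f x\<bar> \<le> sup_norm f" "sup_norm f \<le> 1" "0 \<le> sup_norm f"
    "\<And>s t. \<bar>f s - f t\<bar> \<le> \<bar>s - t\<bar>" "\<And>x. (f has_real_derivative deriv f x) (at x)"
    "\<And>x. \<bar>deriv f x\<bar> \<le> 1"
proof -
  note d = analytic_C1[OF an]
  show dd: "\<And>x. (f has_real_derivative deriv f x) (at x)" by (rule d(1))
  have cf: "isCont f x" for x using d(1) DERIV_isCont by blast
  obtain M where M: "\<And>x. \<bar>f x\<bar> \<le> M" using periodic_bounded[OF per cf] by blast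
  obtain M' where M': "\<And>x. \<bar>deriv f x\<bar> \<le> M'"
    using periodic_bounded[OF deriv_periodic[OF per d(1)] d(2)] by blast
  show fS: "\<And>x. \<bar>f x\<bar> \<le> sup_norm f" unfolding sup_norm_def
    by (rule cSUP_upper) (simp, rule bdd_aboveI2[where M=M], rule M)
  have dS: "\<bar>deriv f x\<bar> \<le> sup_norm (deriv f)" for x unfolding sup_norm_def
    by (rule cSUP_upper) (simp, rule bdd_aboveI2[where M=M'], rule M')
  show "0 \<le> sup_norm f" using fS[of 0] by simp
  moreover have "0 \<le> sup_norm (deriv f)" using dS[of 0] by simp
  ultimately show "sup_norm f \<le> 1" using n1 unfolding C1_norm_def by linarith
  show d1: "\<bar>deriv f x\<bar> \<le> 1" for x using dS[of x] n1 \<open>0 \<le> sup_norm f\<close> unfolding C1_norm_def by linarith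
  show "\<bar>f s - f t\<bar> \<le> \<bar>s - t\<bar>" for s t
  proof -
    have "\<bar>f b - f a\<bar> \<le> \<bar>b - a\<bar>" if ab: "a < b" for a b
    proof -
      obtain z where "f b - f a = (b - a) * deriv f z" using MVT2[OF ab dd] by blast
      then show ?thesis using d1[of z] ab by (simp add: abs_mult mult_left_le)
    qed
    note H = this
    show ?thesis
    proof (cases "s < t")
      case True then show ?thesis using H[of s t] by (simp add: abs_minus_commute)
    next
      case False
      show ?thesis
      proof (cases "t < s")
        case True then show ?thesis using H[of t s] by (simp add: abs_minus_commute)
      next
        case False with \<open>\<not> s < t\<close> have "s = t" by simp
        then show ?thesis by simp
      qed
    qed
  qed
qed



fun cf_p :: "real \<Rightarrow> nat \<Rightarrow> int" where
  "cf_p x 0 = cf_a x 0"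
| "cf_p x (Suc 0) = cf_a x 1 * cf_a x 0 + 1"
| "cf_p x (Suc (Suc n)) = cf_a x (Suc (Suc n)) * cf_p x (Suc n) + cf_p x n"

declare cf_rem.simps(2)[simp del]

definition cfP :: "real \<Rightarrow> nat \<Rightarrow> real" where
  "cfP x n = (\<Prod>i\<le>n. frac (cf_rem x i))"

context
  fixes x :: real
  assumes irr: "x \<notin> \<rat>"
begin

lemma cf_rem_irr: "cf_rem x n \<notin> \<rat>"
proof (induction n)
  case 0 then show ?case using irr by simp
next
  case (Suc n)
  have "frac (cf_rem x n) \<notin> \<rat>"
  proof
    assume "frac (cf_rem x n) \<in> \<rat>"
    hence "frac (cf_rem x n) + of_int \<lfloor>cf_rem x n\<rfloor> \<in> \<rat>" by simp
    then show False using Suc by (simp add: frac_def)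
  qed
  then show ?case by (simp add: divide_inverse cf_rem.simps(2))
qed

lemma frac_pos: "0 < frac (cf_rem x n)" "frac (cf_rem x n) < 1"
proof -
  have "cf_rem x n \<notin> \<int>" using cf_rem_irr[of n] Ints_subset_Rats by blast
  then show "0 < frac (cf_rem x n)" using frac_ge_0 frac_eq_0_iff by (metis order_le_less)
  show "frac (cf_rem x n) < 1" by (rule frac_lt_1)
qed

lemma rem_mult: "cf_rem x (Suc n) * frac (cf_rem x n) = 1"
  using frac_pos(1)[of n] by (simp add: cf_rem.simps(2))

lemma rem_gt1: "cf_rem x (Suc n) > 1"
  using frac_pos[of n] by (simp add: less_divide_eq_1_pos cf_rem.simps(2))

lemma frac_eq: "frac (cf_rem x n) = cf_rem x n - real_of_int (cf_a x n)"
  unfolding cf_a_def frac_def by simp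

lemma a_ge1: "cf_a x (Suc n) \<ge> 1"
  using rem_gt1[of n] unfolding cf_a_def by (simp add: le_floor_iff)

lemma cfP_pos: "cfP x n > 0"
  unfolding cfP_def using frac_pos(1) by (intro prod_pos) blast

lemma cfP_Suc: "cfP x (Suc n) = cfP x n * frac (cf_rem x (Suc n))"
  unfolding cfP_def by (simp add: atMost_Suc mult.commute)

lemma cfP_rec: "cfP x (Suc (Suc n)) = cfP x n - real_of_int (cf_a x (Suc (Suc n))) * cfP x (Suc n)"
proof -
  have fr: "frac (cf_rem x (Suc (Suc n))) = cf_rem x (Suc (Suc n)) - real_of_int (cf_a x (Suc (Suc n)))"
    unfolding cf_a_def frac_def by simp
  have "cfP x (Suc n) * cf_rem x (Suc (Suc n)) = cfP x n"
    using rem_mult[of "Suc n"] by (simp add: cfP_Suc mult.assoc mult.commute[of _ "cf_rem x (Suc (Suc n))"])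
  then show ?thesis by (simp add: cfP_Suc fr algebra_simps del: cf_rem.simps)
qed

lemma qp_formula:
  "real_of_int (cf_q x n) * x - real_of_int (cf_p x n) = (-1)^n * cfP x n \<and>
   real_of_int (cf_q x (Suc n)) * x - real_of_int (cf_p x (Suc n)) = (-1)^(Suc n) * cfP x (Suc n)"
proof (induction n)
  case 0
  have f0: "frac (cf_rem x 0) = x - real_of_int (cf_a x 0)" using frac_eq[of 0] by simp
  have f1: "frac (cf_rem x 1) = cf_rem x 1 - real_of_int (cf_a x 1)" by (rule frac_eq)
  have m: "cf_rem x 1 * frac (cf_rem x 0) = 1" using rem_mult[of 0] by simp
  have P0: "cfP x 0 = frac (cf_rem x 0)" unfolding cfP_def by simp
  have P1: "cfP x 1 = frac (cf_rem x 0) * frac (cf_rem x 1)" unfolding cfP_def by (simp del: cf_rem.simps)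
  have e1: "cf_rem x 1 * (x - real_of_int (cf_a x 0)) = 1" using m f0 by simp
  have A: "real_of_int (cf_q x 0) * x - real_of_int (cf_p x 0) = (-1)^0 * cfP x 0"
  proof -
    have "real_of_int (cf_q x 0) * x - real_of_int (cf_p x 0) = x - real_of_int (cf_a x 0)" by simp
    also have "\<dots> = cfP x 0" unfolding P0 f0 ..
    finally show ?thesis by simp
  qed
  have B: "real_of_int (cf_q x 1) * x - real_of_int (cf_p x 1) = (-1)^1 * cfP x 1"
    using e1 unfolding P1 f0 f1 by (simp add: algebra_simps del: cf_rem.simps)
  show ?case using A B by simp
next
  case (Suc n)
  define A where "A = real_of_int (cf_a x (Suc (Suc n)))"
  have "real_of_int (cf_q x (Suc (Suc n))) * x - real_of_int (cf_p x (Suc (Suc n)))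
      = A * (real_of_int (cf_q x (Suc n)) * x - real_of_int (cf_p x (Suc n)))
        + (real_of_int (cf_q x n) * x - real_of_int (cf_p x n))"
    by (simp add: A_def algebra_simps)
  also have "\<dots> = A * ((-1)^(Suc n) * cfP x (Suc n)) + (-1)^n * cfP x n" using Suc by simp
  also have "\<dots> = (-1)^n * (cfP x n - A * cfP x (Suc n))" by (simp add: algebra_simps)
  also have "\<dots> = (-1)^(Suc (Suc n)) * cfP x (Suc (Suc n))" by (simp add: cfP_rec A_def)
  finally show ?case using Suc by simp
qed

lemma q_pos: "cf_q x n \<ge> 1 \<and> cf_q x (Suc n) \<ge> 1"
proof (induction n)
  case 0 then show ?case using a_ge1[of 0] by simp
next
  case (Suc n)
  have "cf_a x (Suc (Suc n)) * cf_q x (Suc n) \<ge> 1" using a_ge1[of "Suc n"] Suc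
    by (metis mult_le_cancel_right1 order_trans less_le_trans zero_less_one mult_mono zero_le_one mult_1)
  then show ?case using Suc by simp
qed

lemma q_ge_n_aux: "cf_q x n \<ge> int n \<and> cf_q x (Suc n) \<ge> int (Suc n)"
proof (induction n)
  case 0 then show ?case using a_ge1[of 0] by simp
next
  case (Suc n)
  have "cf_a x (Suc (Suc n)) * cf_q x (Suc n) \<ge> cf_q x (Suc n)" using a_ge1[of "Suc n"] q_pos[of n]
    by (simp add: mult_le_cancel_right1)
  moreover have "cf_q x (Suc (Suc n)) = cf_a x (Suc (Suc n)) * cf_q x (Suc n) + cf_q x n" by simp
  ultimately show ?case using Suc q_pos[of n] by linarith
qed

lemma q_ge_n: "cf_q x n \<ge> int n" using q_ge_n_aux by blast

lemma qP_sum: "real_of_int (cf_q x (Suc n)) * cfP x n + real_of_int (cf_q x n) * cfP x (Suc n) = 1"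
proof (induction n)
  case 0
  have f1: "frac (cf_rem x 1) = cf_rem x 1 - real_of_int (cf_a x 1)" by (rule frac_eq)
  have m: "cf_rem x 1 * frac (cf_rem x 0) = 1" using rem_mult[of 0] by simp
  have P0: "cfP x 0 = frac (cf_rem x 0)" unfolding cfP_def by simp
  have P1: "cfP x (Suc 0) = frac (cf_rem x 0) * frac (cf_rem x 1)" unfolding cfP_def by (simp del: cf_rem.simps)
  show ?case using m unfolding P0 P1 f1 by (simp add: algebra_simps del: cf_rem.simps)
next
  case (Suc n)
  then show ?case by (simp add: cfP_rec algebra_simps del: cf_rem.simps)
qed

lemma cf_approx: "\<exists>p::int. \<bar>real_of_int (cf_q x n) * x - p\<bar> * real_of_int (cf_q x (Suc n)) \<le> 1"
proof -
  have "\<bar>real_of_int (cf_q x n) * x - real_of_int (cf_p x n)\<bar> = cfP x n"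
    using qp_formula[of n] cfP_pos[of n] by (simp add: abs_mult)
  moreover have "real_of_int (cf_q x n) * cfP x (Suc n) \<ge> 0" using q_pos[of n] cfP_pos[of "Suc n"] by simp
  ultimately show ?thesis using qP_sum[of n] by (intro exI[of _ "cf_p x n"]) (simp add: mult.commute)
qed

end


datatype m2 = M complex complex complex complex

fun mmul :: "m2 \<Rightarrow> m2 \<Rightarrow> m2" where
  "mmul (M a b c d) (M e f g h) = M (a*e+b*g) (a*f+b*h) (c*e+d*g) (c*f+d*h)"
fun madd :: "m2 \<Rightarrow> m2 \<Rightarrow> m2" where
  "madd (M a b c d) (M e f g h) = M (a+e) (b+f) (c+g) (d+h)"
fun msub :: "m2 \<Rightarrow> m2 \<Rightarrow> m2" where
  "msub (M a b c d) (M e f g h) = M (a-e) (b-f) (c-g) (d-h)"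
fun mv :: "m2 \<Rightarrow> complex \<times> complex \<Rightarrow> complex \<times> complex" where
  "mv (M a b c d) (x, y) = (a*x+b*y, c*x+d*y)"
fun mn :: "m2 \<Rightarrow> real" where
  "mn (M a b c d) = norm a + norm b + norm c + norm d"
fun minv :: "m2 \<Rightarrow> m2" where
  "minv (M a b c d) = M d (-b) (-c) a"
fun mdet :: "m2 \<Rightarrow> complex" where
  "mdet (M a b c d) = a*d - b*c"
fun mtr :: "m2 \<Rightarrow> complex" where
  "mtr (M a b c d) = a + d"
definition mI :: m2 where "mI = M 1 0 0 1"

fun n1 :: "complex \<times> complex \<Rightarrow> real" where
  "n1 (x, y) = norm x + norm y"
fun vsub :: "complex \<times> complex \<Rightarrow> complex \<times> complex \<Rightarrow> complex \<times> complex" where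
  "vsub (x, y) (x', y') = (x - x', y - y')"
fun smul :: "complex \<Rightarrow> complex \<times> complex \<Rightarrow> complex \<times> complex" where
  "smul c (x, y) = (c * x, c * y)"

lemma mv_mmul: "mv (mmul A B) v = mv A (mv B v)"
  by (cases A; cases B; cases v) (simp add: algebra_simps)

lemma mn_nonneg: "mn A \<ge> 0" by (cases A) simp

lemma n1_nonneg: "n1 v \<ge> 0" by (cases v) simp

lemma n1_mv: "n1 (mv A v) \<le> mn A * n1 v"
proof (cases A; cases v)
  fix a b c d x y assume [simp]: "A = M a b c d" "v = (x, y)"
  have "norm (a*x+b*y) + norm (c*x+d*y) \<le> (norm a * norm x + norm b * norm y) + (norm c * norm x + norm d * norm y)"
    by (intro add_mono) (auto intro!: order_trans[OF norm_triangle_ineq] simp: norm_mult)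
  also have "\<dots> \<le> (norm a + norm b + norm c + norm d) * (norm x + norm y)"
    by (simp add: algebra_simps)
  finally show ?thesis by simp
qed

lemma mn_madd: "mn (madd A B) \<le> mn A + mn B"
proof (cases A; cases B)
  fix a b c d e f g h assume AB: "A = M a b c d" "B = M e f g h"
  show ?thesis using norm_triangle_ineq[of a e] norm_triangle_ineq[of b f] norm_triangle_ineq[of c g]
    norm_triangle_ineq[of d h] unfolding AB by simp
qed

lemma mn_mmul: "mn (mmul A B) \<le> mn A * mn B"
proof (cases A; cases B)
  fix a b c d e f g h assume AB: "A = M a b c d" "B = M e f g h"
  have t: "norm (p*r + s*t) \<le> norm p * norm r + norm s * norm t" for p r s t :: complex
    by (rule order_trans[OF norm_triangle_ineq]) (simp add: norm_mult)
  have "mn (mmul A B) \<le> (norm a * norm e + norm b * norm g) + (norm a * norm f + norm b * norm h)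
       + (norm c * norm e + norm d * norm g) + (norm c * norm f + norm d * norm h)"
    unfolding AB by (simp only: mmul.simps mn.simps) (intro add_mono t)
  also have "\<dots> \<le> mn A * mn B" unfolding AB by (simp add: algebra_simps)
  finally show ?thesis .
qed

lemma mdet_mmul: "mdet (mmul A B) = mdet A * mdet B"
  by (cases A; cases B) (simp add: algebra_simps)

lemma mv_msub: "vsub (mv A v) (mv B v) = mv (msub A B) v"
  by (cases A; cases B; cases v) (simp add: algebra_simps)

lemma mn_minv_msub: "mn (msub (minv A) (minv B)) = mn (msub A B)"
proof (cases A; cases B)
  fix a b c d e f g h assume [simp]: "A = M a b c d" "B = M e f g h"
  have "norm (e - a) = norm (a - e)" "norm (h - d) = norm (d - h)" by (simp_all add: norm_minus_commute)
  then show ?thesis by (simp add: norm_minus_commute)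
qed

lemma minv_mv: "mdet T = 1 \<Longrightarrow> mv (minv T) (mv T x) = x"
proof (cases T; cases x)
  fix a b c d y z assume det: "mdet T = 1" and Tx: "T = M a b c d" "x = (y, z)"
  have "a * d - b * c = 1" using det Tx by simp
  then have "d * (a * y + b * z) + - b * (c * y + d * z) = y" "- c * (a * y + b * z) + a * (c * y + d * z) = z"
    by algebra+
  then show ?thesis unfolding Tx by simp
qed

lemma n1_vsub: "n1 (vsub a b) \<le> n1 a + n1 b"
proof (cases a; cases b)
  fix p q r t assume ab: "a = (p, q)" "b = (r, t)"
  show ?thesis using norm_triangle_ineq4[of p r] norm_triangle_ineq4[of q t] unfolding ab by simp
qed

lemma n1_vsub2: "n1 a \<le> n1 b + n1 (vsub a b)"
proof (cases a; cases b)
  fix p q r t assume ab: "a = (p, q)" "b = (r, t)"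
  show ?thesis using norm_triangle_sub[of p r] norm_triangle_sub[of q t] unfolding ab by simp
qed

lemma n1_smul: "n1 (smul c v) = norm c * n1 v"
  by (cases v) (simp add: norm_mult algebra_simps)

lemma CH1: "mdet T = 1 \<Longrightarrow> x = vsub (smul (mtr T) (mv T x)) (mv T (mv T x))"
proof (cases T; cases x)
  fix a b c d y z assume det: "mdet T = 1" and Tx: "T = M a b c d" "x = (y, z)"
  have "a * d - b * c = 1" using det Tx by simp
  then have "y = (a + d) * (a * y + b * z) - (a * (a * y + b * z) + b * (c * y + d * z))"
     "z = (a + d) * (c * y + d * z) - (c * (a * y + b * z) + d * (c * y + d * z))"
    by algebra+
  then show ?thesis unfolding Tx by simp
qed

lemma CH2: "mdet T = 1 \<Longrightarrow> smul (mtr T) x = (let y = mv T x; z = mv (minv T) x in (fst y + fst z, snd y + snd z))"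
  by (cases T; cases x) (simp add: algebra_simps)

lemma gordon_alg:
  assumes "mdet T = 1"
  shows "n1 x \<le> 2 * max (n1 (mv T x)) (max (n1 (mv T (mv T x))) (n1 (mv (minv T) x)))"
proof (cases "norm (mtr T) \<le> 1")
  case True
  have "n1 x \<le> n1 (smul (mtr T) (mv T x)) + n1 (mv T (mv T x))"
    using CH1[OF assms, of x] n1_vsub by metis
  also have "\<dots> \<le> n1 (mv T x) + n1 (mv T (mv T x))"
    using True n1_nonneg[of "mv T x"] by (simp add: n1_smul mult_left_le_one_le)
  finally show ?thesis by simp
next
  case False
  obtain y1 y2 where y: "mv T x = (y1, y2)" by (cases "mv T x")
  obtain z1 z2 where z: "mv (minv T) x = (z1, z2)" by (cases "mv (minv T) x")
  have "norm (mtr T) * n1 x = n1 (smul (mtr T) x)" by (simp add: n1_smul)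
  also have "\<dots> = norm (y1 + z1) + norm (y2 + z2)" using CH2[OF assms, of x] y z by simp
  also have "\<dots> \<le> n1 (mv T x) + n1 (mv (minv T) x)" using y z
    by (simp add: norm_triangle_ineq add_mono order_trans[OF norm_triangle_ineq])
      (smt (verit, best) norm_triangle_ineq)
  finally have "norm (mtr T) * n1 x \<le> n1 (mv T x) + n1 (mv (minv T) x)" .
  moreover have "n1 x \<le> norm (mtr T) * n1 x" using False n1_nonneg[of x]
    by (simp add: mult_le_cancel_right1)
  ultimately show ?thesis by simp
qed

fun Pm :: "(nat \<Rightarrow> m2) \<Rightarrow> nat \<Rightarrow> m2" where
  "Pm F 0 = mI"
| "Pm F (Suc k) = mmul (F k) (Pm F k)"

lemma Pm_det: "(\<And>i. i < k \<Longrightarrow> mdet (F i) = 1) \<Longrightarrow> mdet (Pm F k) = 1"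
  by (induction k) (auto simp: mdet_mmul mI_def)

lemma Pm_bound: "(\<And>i. i < k \<Longrightarrow> mn (F i) \<le> B) \<Longrightarrow> mn (Pm F k) \<le> 2 * B ^ k"
proof (induction k)
  case 0 then show ?case by (simp add: mI_def)
next
  case (Suc k)
  have B0: "0 \<le> B" using Suc.prems[of 0] mn_nonneg[of "F 0"] by simp
  have "mn (Pm F (Suc k)) \<le> mn (F k) * mn (Pm F k)" by (simp add: mn_mmul)
  also have "\<dots> \<le> B * (2 * B ^ k)"
    using Suc B0 by (intro mult_mono) (auto simp: mn_nonneg)
  finally show ?case by (simp add: algebra_simps)
qed

lemma msub_mmul: "msub (mmul A X) (mmul A' Y) = madd (mmul A (msub X Y)) (mmul (msub A A') Y)"
  by (cases A; cases A'; cases X; cases Y) (simp add: algebra_simps)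

lemma Pm_pert:
  assumes "\<And>i. i < k \<Longrightarrow> mn (F i) \<le> B" "\<And>i. i < k \<Longrightarrow> mn (G i) \<le> B"
    "\<And>i. i < k \<Longrightarrow> mn (msub (F i) (G i)) \<le> \<epsilon>" "B \<ge> 1"
  shows "mn (msub (Pm F k) (Pm G k)) \<le> 2 * real k * B ^ k * \<epsilon>"
  using assms
proof (induction k)
  case 0 then show ?case by (simp add: mI_def)
next
  case (Suc k)
  have e0: "\<epsilon> \<ge> 0" using Suc.prems(3)[of 0] mn_nonneg order_trans by blast
  have IH: "mn (msub (Pm F k) (Pm G k)) \<le> 2 * real k * B ^ k * \<epsilon>" using Suc by simp
  have BG: "mn (Pm G k) \<le> 2 * B ^ k" using Suc.prems(2) by (intro Pm_bound) simp
  have "mn (msub (Pm F (Suc k)) (Pm G (Suc k)))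
     \<le> mn (F k) * mn (msub (Pm F k) (Pm G k)) + mn (msub (F k) (G k)) * mn (Pm G k)"
    by (simp only: Pm.simps msub_mmul) (rule order_trans[OF mn_madd add_mono[OF mn_mmul mn_mmul]])
  also have "\<dots> \<le> B * (2 * real k * B ^ k * \<epsilon>) + \<epsilon> * (2 * B ^ k)"
    using Suc.prems e0 IH BG by (intro add_mono mult_mono) (auto simp: mn_nonneg)
  also have "\<dots> \<le> 2 * real (Suc k) * B ^ Suc k * \<epsilon>"
  proof -
    have "\<epsilon> * (2 * B ^ k) \<le> \<epsilon> * (2 * B ^ Suc k)"
      using Suc.prems(4) e0 by (intro mult_left_mono) (auto simp: mult_le_cancel_right1)
    then show ?thesis by (simp add: algebra_simps)
  qed
  finally show ?case .
qed



definition Am :: "(int \<Rightarrow> real) \<Rightarrow> int \<Rightarrow> m2" where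
  "Am W n = M (complex_of_real (W n)) (-1) 1 0"

lemma transfer:
  assumes rec: "\<And>n. u (n+1) + u (n-1) = complex_of_real (W n) * u n"
  shows "(u (m + int k + 1), u (m + int k)) = mv (Pm (\<lambda>i. Am W (m + 1 + int i)) k) (u (m + 1), u m)"
proof (induction k)
  case 0 then show ?case by (simp add: mI_def)
next
  case (Suc k)
  have r: "u (m + int k + 2) = complex_of_real (W (m + int k + 1)) * u (m + int k + 1) - u (m + int k)"
    using rec[of "m + int k + 1"] by (simp add: algebra_simps)
  have "(u (m + int (Suc k) + 1), u (m + int (Suc k))) = mv (Am W (m + 1 + int k)) (u (m + int k + 1), u (m + int k))"
    unfolding Am_def using r by (simp add: algebra_simps)
  also have "\<dots> = mv (Pm (\<lambda>i. Am W (m + 1 + int i)) (Suc k)) (u (m + 1), u m)"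
    using Suc by (simp add: mv_mmul)
  finally show ?case .
qed

lemma gordon_main:
  fixes W :: "int \<Rightarrow> real" and u :: "int \<Rightarrow> complex" and q :: nat and B \<epsilon> :: real
  assumes rec: "\<And>n. u (n+1) + u (n-1) = complex_of_real (W n) * u n"
    and WB: "\<And>n. \<bar>W n\<bar> + 2 \<le> B" and B1: "B \<ge> 1"
    and Wq: "\<And>n. \<bar>W (n + int q) - W n\<bar> \<le> \<epsilon>"
    and small: "8 * real q * B ^ (2 * q) * \<epsilon> \<le> 1/4"
  shows "n1 (u 1, u 0) \<le> 4 * max (n1 (u (int q + 1), u (int q)))
            (max (n1 (u (2 * int q + 1), u (2 * int q))) (n1 (u (- int q + 1), u (- int q))))"
proof -
  define x where "x = (u 1, u 0)"
  define T where "T = Pm (\<lambda>i. Am W (0 + 1 + int i)) q"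
  define T1 where "T1 = Pm (\<lambda>i. Am W (int q + 1 + int i)) q"
  define T2 where "T2 = Pm (\<lambda>i. Am W (- int q + 1 + int i)) q"
  have mnA: "mn (Am W n) \<le> B" for n using WB[of n] by (simp add: Am_def)
  have detA: "mdet (Am W n) = 1" for n by (simp add: Am_def)
  have e0: "0 \<le> \<epsilon>" using Wq[of 0] by simp
  have Bq: "B ^ q \<ge> 1" using B1 by simp
  have y: "(u (int q + 1), u (int q)) = mv T x"
    using transfer[OF rec, of 0 q] unfolding T_def x_def by simp
  have z: "(u (2 * int q + 1), u (2 * int q)) = mv T1 (u (int q + 1), u (int q))"
    using transfer[OF rec, of "int q" q] unfolding T1_def by (simp add: algebra_simps)
  have w0: "x = mv T2 (u (- int q + 1), u (- int q))"
    using transfer[OF rec, of "- int q" q] unfolding T2_def x_def by simp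
  have detT2: "mdet T2 = 1" unfolding T2_def by (rule Pm_det) (simp add: detA)
  have detT: "mdet T = 1" unfolding T_def by (rule Pm_det) (simp add: detA)
  have w: "(u (- int q + 1), u (- int q)) = mv (minv T2) x"
    using minv_mv[OF detT2] w0 by simp
  define \<delta> where "\<delta> = 2 * real q * B ^ q * \<epsilon>"
  have d0: "\<delta> \<ge> 0" unfolding \<delta>_def using e0 B1 by simp
  have p1: "mn (msub T T1) \<le> \<delta>" unfolding T_def T1_def \<delta>_def
  proof (rule Pm_pert[OF _ _ _ B1])
    fix i assume "i < q"
    show "mn (msub (Am W (0 + 1 + int i)) (Am W (int q + 1 + int i))) \<le> \<epsilon>"
      using Wq[of "1 + int i"] by (simp add: Am_def algebra_simps abs_minus_commute flip: of_real_diff)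
  qed (simp_all add: mnA)
  have p2: "mn (msub T T2) \<le> \<delta>" unfolding T_def T2_def \<delta>_def
  proof (rule Pm_pert[OF _ _ _ B1])
    fix i assume "i < q"
    show "mn (msub (Am W (0 + 1 + int i)) (Am W (- int q + 1 + int i))) \<le> \<epsilon>"
      using Wq[of "- int q + 1 + int i"] by (simp add: Am_def algebra_simps flip: of_real_diff)
  qed (simp_all add: mnA)
  have bT: "mn T \<le> 2 * B ^ q" unfolding T_def by (rule Pm_bound) (simp add: mnA)
  define err where "err = \<delta> * (2 * B ^ q) * n1 x"
  have err_small: "2 * err \<le> n1 x / 4"
  proof -
    have "2 * err = (8 * real q * B ^ (2 * q) * \<epsilon>) * n1 x"
    proof -
      have "B ^ (2 * q) = B ^ q * B ^ q" by (simp add: mult_2 power_add)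
      then show ?thesis unfolding err_def \<delta>_def by (simp add: algebra_simps)
    qed
    also have "\<dots> \<le> (1/4) * n1 x" by (rule mult_right_mono[OF small n1_nonneg])
    finally show ?thesis by simp
  qed
  have ny: "n1 (mv T x) \<le> 2 * B ^ q * n1 x"
    by (rule order_trans[OF n1_mv mult_right_mono[OF bT n1_nonneg]])
  have b2: "n1 (mv T (mv T x)) \<le> n1 (u (2 * int q + 1), u (2 * int q)) + err"
  proof -
    have "n1 (mv T (mv T x)) \<le> n1 (mv T1 (mv T x)) + n1 (vsub (mv T (mv T x)) (mv T1 (mv T x)))"
      by (rule n1_vsub2)
    also have "n1 (vsub (mv T (mv T x)) (mv T1 (mv T x))) \<le> mn (msub T T1) * n1 (mv T x)"
      unfolding mv_msub by (rule n1_mv)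
    also have "\<dots> \<le> \<delta> * (2 * B ^ q * n1 x)"
      using p1 ny by (intro mult_mono) (auto simp: mn_nonneg n1_nonneg d0)
    finally show ?thesis using z y unfolding err_def by (simp add: mult.assoc)
  qed
  have b3: "n1 (mv (minv T) x) \<le> n1 (u (- int q + 1), u (- int q)) + err"
  proof -
    have "n1 (mv (minv T) x) \<le> n1 (mv (minv T2) x) + n1 (vsub (mv (minv T) x) (mv (minv T2) x))"
      by (rule n1_vsub2)
    also have "n1 (vsub (mv (minv T) x) (mv (minv T2) x)) \<le> mn (msub T T2) * n1 x"
      unfolding mv_msub using n1_mv[of "msub (minv T) (minv T2)" x] by (simp add: mn_minv_msub)
    also have "\<dots> \<le> \<delta> * n1 x" using p2 by (intro mult_right_mono) (auto simp: n1_nonneg)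
    also have "\<dots> \<le> \<delta> * (2 * B ^ q) * n1 x"
      using d0 Bq n1_nonneg[of x] by (intro mult_right_mono) (auto simp: mult_le_cancel_left1)
    finally show ?thesis using w unfolding err_def by simp
  qed
  have g: "n1 x \<le> 2 * max (n1 (mv T x)) (max (n1 (mv T (mv T x))) (n1 (mv (minv T) x)))"
    by (rule gordon_alg[OF detT])
  have e0': "err \<ge> 0" unfolding err_def using d0 Bq n1_nonneg[of x] by simp
  define Mx where "Mx = max (n1 (u (int q + 1), u (int q)))
            (max (n1 (u (2 * int q + 1), u (2 * int q))) (n1 (u (- int q + 1), u (- int q))))"
  have "max (n1 (mv T x)) (max (n1 (mv T (mv T x))) (n1 (mv (minv T) x))) \<le> Mx + err"
    using b2 b3 y e0' unfolding Mx_def by (auto simp: max_def)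
  with g err_small have "n1 x \<le> 2 * Mx + n1 x / 4" by linarith
  then have "n1 x \<le> 4 * Mx" using n1_nonneg[of x] by linarith
  then show ?thesis unfolding Mx_def x_def .
qed



lemma exp_lip:
  fixes a b c :: real
  assumes "a \<le> c" "b \<le> c"
  shows "\<bar>exp a - exp b\<bar> \<le> exp c * \<bar>a - b\<bar>"
proof -
  have H: "\<bar>exp y - exp x\<bar> \<le> exp c * \<bar>y - x\<bar>" if xy: "x < y" "y \<le> c" for x y
  proof -
    have d: "\<And>z. x \<le> z \<Longrightarrow> z \<le> y \<Longrightarrow> (exp has_real_derivative exp z) (at z)"
      by (rule DERIV_exp)
    obtain z where z: "x < z" "z < y" "exp y - exp x = (y - x) * exp z" using MVT2[OF xy(1) d] by blast
    have "exp z \<le> exp c" using z xy by simp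
    then show ?thesis using z xy by (simp add: abs_mult mult.commute mult_right_mono)
  qed
  show ?thesis
  proof (cases "a < b")
    case True then show ?thesis using H[of a b] assms by (simp add: abs_minus_commute)
  next
    case False
    show ?thesis
    proof (cases "b < a")
      case True then show ?thesis using H[of b a] assms by simp
    next
      case False with \<open>\<not> a < b\<close> have "a = b" by simp
      then show ?thesis by simp
    qed
  qed
qed

lemma decay:
  fixes u :: "int \<Rightarrow> complex"
  assumes l2: "(\<lambda>n. (norm (u n))\<^sup>2) summable_on UNIV" and eta: "\<eta> > 0"
  shows "\<exists>N. \<forall>n. \<bar>n\<bar> \<ge> N \<longrightarrow> norm (u n) < \<eta>"
proof -
  define g where "g n = (norm (u n))\<^sup>2" for n
  define t where "t = \<eta>\<^sup>2"
  have t: "t > 0" using eta unfolding t_def by simp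
  have gs: "g summable_on UNIV" using l2 unfolding g_def .
  have g0: "g n \<ge> 0" for n unfolding g_def by simp
  have fin: "finite {n. t \<le> g n}"
  proof (rule ccontr)
    assume *: "infinite {n. t \<le> g n}"
    obtain b' :: nat where b': "of_nat b' \<ge> (infsum g UNIV + 1) / t" by (meson real_arch_simple)
    obtain F where cardF: "card F \<ge> b'" and "finite F" and F: "F \<subseteq> {n. t \<le> g n}"
      using * by (meson finite_if_finite_subsets_card_bdd nle_le)
    have "infsum g UNIV + 1 \<le> of_nat b' * t"
      using b' t by (simp add: field_simps)
    also have "\<dots> \<le> of_nat (card F) * t" using cardF t by simp
    also have "\<dots> = sum (\<lambda>x. t) F" by simp
    also have "\<dots> \<le> sum g F" using F by (intro sum_mono) auto
    also have "\<dots> = infsum g F" using \<open>finite F\<close> by simp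
    also have "\<dots> \<le> infsum g UNIV"
      by (rule infsum_mono_neutral) (use \<open>finite F\<close> gs g0 in auto)
    finally show False by simp
  qed
  define N where "N = Max (insert 0 (abs ` {n. t \<le> g n})) + 1"
  have "norm (u n) < \<eta>" if "\<bar>n\<bar> \<ge> N" for n
  proof -
    have "n \<notin> {n. t \<le> g n}"
    proof
      assume "n \<in> {n. t \<le> g n}"
      then have "\<bar>n\<bar> \<le> Max (insert 0 (abs ` {n. t \<le> g n}))" using fin by (intro Max_ge) auto
      then show False using that unfolding N_def by simp
    qed
    then have "(norm (u n))\<^sup>2 < \<eta>\<^sup>2" unfolding g_def t_def by simp
    then show ?thesis using eta by (simp add: power_less_imp_less_base)
  qed
  then show ?thesis by blast
qed

lemma growth:
  fixes B L K :: real
  assumes "B \<ge> 1" "B\<^sup>2 < exp (40 * K)" "L > 0"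
  shows "\<exists>N0. \<forall>q\<ge>N0. 32 * L * real q * B ^ (2 * q) \<le> exp (40 * K * real q)"
proof -
  define \<rho> where "\<rho> = B\<^sup>2 / exp (40 * K)"
  have r0: "0 < \<rho>" and r1: "\<rho> < 1" using assms unfolding \<rho>_def by auto
  have "(\<lambda>n. of_nat n * \<rho> ^ n) \<longlonglongrightarrow> 0" by (rule powser_times_n_limit_0) (use r0 r1 in simp)
  then have "eventually (\<lambda>n. of_nat n * \<rho> ^ n < 1 / (32 * L)) sequentially"
    using assms(3) by (intro order_tendstoD(2)) auto
  then obtain N0 where N0: "\<And>n. n \<ge> N0 \<Longrightarrow> of_nat n * \<rho> ^ n < 1 / (32 * L)"
    unfolding eventually_sequentially by blast
  have "32 * L * real q * B ^ (2 * q) \<le> exp (40 * K * real q)" if "q \<ge> N0" for q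
  proof -
    have e: "exp (40 * K * real q) = exp (40 * K) ^ q" by (simp add: exp_of_nat_mult[symmetric] mult.commute)
    have b: "B ^ (2 * q) = \<rho> ^ q * exp (40 * K) ^ q"
      unfolding \<rho>_def by (simp add: power_mult power_divide)
    have "real q * \<rho> ^ q < 1 / (32 * L)" using N0[OF that] r0 by simp
    then have "32 * L * (real q * \<rho> ^ q) \<le> 1" using assms(3) by (simp add: field_simps)
    then have "32 * L * (real q * \<rho> ^ q) * exp (40 * K) ^ q \<le> exp (40 * K) ^ q"
      by (simp add: mult_left_le_one_le)
    then show ?thesis unfolding e b by (simp add: algebra_simps)
  qed
  then show ?thesis by blast
qed



theorem mainTheorem5:
  fixes f :: "real \<Rightarrow> real" and K \<omega> :: real
  assumes f_periodic: "periodic1 f"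
    and f_analytic: "real_analytic f"
    and f_nonconst: "\<not> (\<exists>c. \<forall>x. f x = c)"
    and f_mean: "integral {0..1} f = 0"
    and f_norm: "C1_norm f = 1"
    and K_ge: "K \<ge> 1"
    and \<omega>_irr: "\<omega> \<notin> \<rat>"
    and \<beta>_large: "beta_exp \<omega> > ereal (40 * K)"
  shows "\<forall>\<theta> E. E \<in> {0 .. 4 * exp (K * sup_norm f)} \<longrightarrow> \<not> is_eigenvalue_H K f \<theta> \<omega> E"
proof (intro allI impI notI)
  fix \<theta> E assume E: "E \<in> {0 .. 4 * exp (K * sup_norm f)}" and ev: "is_eigenvalue_H K f \<theta> \<omega> E"
  obtain u where u0: "u \<noteq> (\<lambda>_. 0)" and l2: "(\<lambda>n. (norm (u n))\<^sup>2) summable_on UNIV"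
    and eq: "\<And>n. - u (n + 1) - u (n - 1) + complex_of_real (potential K f \<omega> (\<theta> + real_of_int n * \<omega>)) * u n
              = complex_of_real E * u n"
    using ev unfolding is_eigenvalue_H_def by blast
  note fp = f_props[OF f_periodic f_analytic f_norm]
  define S where "S = sup_norm f"
  have S0: "0 \<le> S" "S \<le> 1" using fp unfolding S_def by auto
  have fS: "\<bar>f y\<bar> \<le> S" for y using fp unfolding S_def by auto
  define V where "V t = potential K f \<omega> t" for t
  define W where "W n = V (\<theta> + real_of_int n * \<omega>) - E" for n
  have K0: "K > 0" using K_ge by simp
  have rec: "u (n+1) + u (n-1) = complex_of_real (W n) * u n" for n
    using eq[of n] unfolding W_def V_def by (simp add: algebra_simps)
  define B where "B = 4 * exp K + 2"
  have B1: "B \<ge> 1" using exp_gt_zero[of K] unfolding B_def by linarith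
  have KfK: "K * f y \<le> K" "- K * f y \<le> K" for y
  proof -
    have "\<bar>K * f y\<bar> \<le> K" using fS[of y] S0 K0 by (simp add: abs_mult mult_left_le)
    then show "K * f y \<le> K" "- K * f y \<le> K" by auto
  qed
  have expS: "exp (K * S) \<le> exp K" using S0 K0 by (simp add: mult_left_le)
  have Vb: "0 < V t" "V t \<le> 2 * exp (K * S)" for t
  proof -
    have "K * f (t + \<omega>) \<le> K * S" using fS[of "t + \<omega>"] K0 by (intro mult_left_mono) (auto simp: abs_le_iff)
    moreover have "K * (- f t) \<le> K * S" using fS[of t] K0 by (intro mult_left_mono) (auto simp: abs_le_iff)
    ultimately have "K * f (t + \<omega>) \<le> K * S" "- K * f t \<le> K * S" by auto
    then have "exp (K * f (t + \<omega>)) \<le> exp (K * S)" "exp (- K * f t) \<le> exp (K * S)" by auto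
    moreover have "exp (K * f (t + \<omega>)) > 0" "exp (- K * f t) > 0" by auto
    ultimately show "V t \<le> 2 * exp (K * S)" "0 < V t" unfolding V_def potential_def by linarith+
  qed
  have WB: "\<bar>W n\<bar> + 2 \<le> B" for n
  proof -
    have "E \<le> 4 * exp (K * S)" "0 \<le> E" using E unfolding S_def by auto
    moreover note Vb[of "\<theta> + real_of_int n * \<omega>"]
    ultimately have "\<bar>W n\<bar> \<le> 4 * exp (K * S)" unfolding W_def abs_le_iff by linarith
    then show ?thesis using expS unfolding B_def by linarith
  qed
  define L where "L = 2 * K * exp K"
  have L0: "L > 0" unfolding L_def using K0 by simp
  have Vlip: "\<bar>V s - V t\<bar> \<le> L * \<bar>s - t\<bar>" for s t
  proof -
    have l1: "\<bar>exp (K * f (s + \<omega>)) - exp (K * f (t + \<omega>))\<bar> \<le> exp K * \<bar>K * f (s + \<omega>) - K * f (t + \<omega>)\<bar>"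
      by (rule exp_lip) (rule KfK)+
    have l2': "\<bar>exp (- K * f s) - exp (- K * f t)\<bar> \<le> exp K * \<bar>- K * f s - - K * f t\<bar>"
      by (rule exp_lip) (rule KfK)+
    have a1: "\<bar>K * f (s + \<omega>) - K * f (t + \<omega>)\<bar> \<le> K * \<bar>s - t\<bar>"
      using fp(4)[of "s + \<omega>" "t + \<omega>"] K0 by (simp add: abs_mult flip: right_diff_distrib mult_left_mono)
    have a2: "\<bar>- K * f s - - K * f t\<bar> \<le> K * \<bar>s - t\<bar>"
    proof -
      have "\<bar>- K * f s - - K * f t\<bar> = K * \<bar>f s - f t\<bar>" using K0 by (simp add: abs_mult flip: right_diff_distrib)
      then show ?thesis using fp(4)[of s t] K0 by (simp add: mult_left_mono)
    qed
    have "\<bar>V s - V t\<bar> \<le> \<bar>exp (K * f (s + \<omega>)) - exp (K * f (t + \<omega>))\<bar> + \<bar>exp (- K * f s) - exp (- K * f t)\<bar>"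
      unfolding V_def potential_def by linarith
    also have "\<dots> \<le> exp K * (K * \<bar>s - t\<bar>) + exp K * (K * \<bar>s - t\<bar>)"
    proof -
      have "exp K * \<bar>K * f (s + \<omega>) - K * f (t + \<omega>)\<bar> \<le> exp K * (K * \<bar>s - t\<bar>)"
        by (rule mult_left_mono[OF a1]) simp
      moreover have "exp K * \<bar>- K * f s - - K * f t\<bar> \<le> exp K * (K * \<bar>s - t\<bar>)"
        by (rule mult_left_mono[OF a2]) simp
      ultimately show ?thesis using l1 l2' by linarith
    qed
    finally show ?thesis unfolding L_def by (simp add: algebra_simps)
  qed
  have Vper: "V (t + real_of_int p) = V t" for t p
    unfolding V_def potential_def
    using periodic_int[OF f_periodic, of t p] periodic_int[OF f_periodic, of "t + \<omega>" p]
    by (simp add: add.commute add.left_commute)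
  have x0: "n1 (u 1, u 0) > 0"
  proof (rule ccontr)
    assume "\<not> n1 (u 1, u 0) > 0"
    then have h: "norm (u 1) + norm (u 0) \<le> 0" by simp
    have "norm (u 1) \<le> 0" "norm (u 0) \<le> 0"
      using h norm_ge_zero[of "u 1"] norm_ge_zero[of "u 0"] by linarith+
    then have z: "u 1 = 0" "u 0 = 0" by simp_all
    have up: "u (int k) = 0 \<and> u (int k + 1) = 0" for k
    proof (induction k)
      case 0 then show ?case using z by simp
    next
      case (Suc k)
      have "u (int k + 1 + 1) = complex_of_real (W (int k + 1)) * u (int k + 1) - u (int k)"
        using rec[of "int k + 1"] by (simp add: algebra_simps)
      then show ?case using Suc by (simp add: algebra_simps)
    qed
    have dn: "u (- int k) = 0 \<and> u (- int k + 1) = 0" for k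
    proof (induction k)
      case 0 then show ?case using z by simp
    next
      case (Suc k)
      have "u (- int k - 1) = complex_of_real (W (- int k)) * u (- int k) - u (- int k + 1)"
        using rec[of "- int k"] by (simp add: algebra_simps)
      then have "u (- int k - 1) = 0" using Suc by simp
      moreover have e1: "- int (Suc k) = - int k - 1" by simp
      moreover have e2: "- int k - 1 + 1 = - int k" by simp
      ultimately show ?case using Suc by (simp only: e1 e2)
    qed
    have "u n = 0" for n
    proof (cases "n \<ge> 0")
      case True then show ?thesis using up[of "nat n"] by simp
    next
      case False then show ?thesis using dn[of "nat (- n)"] by simp
    qed
    then show False using u0 by auto
  qed
  define x where "x = n1 (u 1, u 0)"
  obtain N where N: "\<And>n. \<bar>n\<bar> \<ge> N \<Longrightarrow> norm (u n) < x / 8"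
    using decay[OF l2, of "x / 8"] x0 unfolding x_def by auto
  have B2: "B\<^sup>2 < exp (40 * K)"
  proof -
    have "1 \<le> exp K" using K0 by simp
    then have "B \<le> 6 * exp K" unfolding B_def by linarith
    then have "B\<^sup>2 \<le> (6 * exp K)\<^sup>2" using B1 by (intro power_mono) auto
    also have "\<dots> = 36 * exp (2 * K)" by (simp add: exp_double power_mult_distrib)
    also have "\<dots> < exp (38 * K) * exp (2 * K)"
    proof -
      have "1 + 38 * K \<le> exp (38 * K)" by (rule exp_ge_add_one_self)
      then have "36 < exp (38 * K)" using K_ge by linarith
      then show ?thesis by simp
    qed
    also have "\<dots> = exp (40 * K)" unfolding exp_add[symmetric] by simp
    finally show ?thesis .
  qed
  obtain N0 where N0: "\<And>q. q \<ge> N0 \<Longrightarrow> 32 * L * real q * B ^ (2 * q) \<le> exp (40 * K * real q)"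
    using growth[OF B1 B2 L0] by blast
  have freq: "\<forall>M. \<exists>k\<ge>M. ereal (40 * K) < ereal (ln (real_of_int (cf_q \<omega> (Suc k))) / real_of_int (cf_q \<omega> k))"
  proof -
    let ?X = "\<lambda>n. ereal (ln (real_of_int (cf_q \<omega> (Suc n))) / real_of_int (cf_q \<omega> n))"
    have "\<not> ereal (40 * K) \<ge> limsup ?X" using \<beta>_large unfolding beta_exp_def by simp
    then obtain y where y: "y > ereal (40 * K)" "\<not> eventually (\<lambda>n. y > ?X n) sequentially"
      unfolding Limsup_le_iff by blast
    then have "frequently (\<lambda>n. ?X n \<ge> y) sequentially"
      unfolding frequently_def not_le by simp
    then have "frequently (\<lambda>n. ereal (40 * K) < ?X n) sequentially"
    proof (rule frequently_elim1)
      fix i assume "?X i \<ge> y"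
      from less_le_trans[OF y(1) this] show "ereal (40 * K) < ?X i" .
    qed
    then show ?thesis unfolding frequently_sequentially by blast
  qed
  obtain k where k: "k \<ge> max (nat N + 1) N0"
    and kr: "ereal (40 * K) < ereal (ln (real_of_int (cf_q \<omega> (Suc k))) / real_of_int (cf_q \<omega> k))"
    using freq by blast
  define q where "q = nat (cf_q \<omega> k)"
  define Q where "Q = real_of_int (cf_q \<omega> (Suc k))"
  have qk: "cf_q \<omega> k \<ge> int k" by (rule q_ge_n[OF \<omega>_irr])
  have qq: "real_of_int (cf_q \<omega> k) = real q" unfolding q_def using qk by simp
  have qN: "int q \<ge> N + 1" "q \<ge> N0" using qk k unfolding q_def by auto
  have Qpos: "Q \<ge> 1" unfolding Q_def using q_pos[OF \<omega>_irr, of k] by simp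
  have QL: "exp (40 * K * real q) < Q"
  proof -
    have "40 * K < ln Q / real q" using kr unfolding Q_def qq by simp
    moreover have "real q > 0" using qN(1) qk k unfolding q_def by linarith
    ultimately have "40 * K * real q < ln Q" by (simp add: field_simps)
    then show ?thesis using Qpos by (metis exp_less_mono exp_ln less_le_trans zero_less_one)
  qed
  obtain p :: int where p: "\<bar>real_of_int (cf_q \<omega> k) * \<omega> - p\<bar> * Q \<le> 1"
    using cf_approx[OF \<omega>_irr, of k] unfolding Q_def by blast
  define \<epsilon> where "\<epsilon> = L / Q"
  have Wq: "\<bar>W (n + int q) - W n\<bar> \<le> \<epsilon>" for n
  proof -
    define t where "t = \<theta> + real_of_int n * \<omega>"
    define D where "D = real q * \<omega> - real_of_int p"
    have "\<theta> + real_of_int (n + int q) * \<omega> = (t + D) + real_of_int p"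
      unfolding t_def D_def by (simp add: algebra_simps)
    then have "W (n + int q) - W n = V (t + D) - V t" unfolding W_def t_def[symmetric] using Vper by simp
    then have "\<bar>W (n + int q) - W n\<bar> \<le> L * \<bar>D\<bar>" using Vlip[of "t + D" t] by simp
    also have "\<dots> \<le> L / Q"
    proof -
      have "\<bar>D\<bar> * Q \<le> 1" using p unfolding D_def qq .
      then have "\<bar>D\<bar> \<le> 1 / Q" using Qpos by (simp add: field_simps)
      then show ?thesis using L0 Qpos by (simp add: mult_left_mono field_simps)
    qed
    finally show ?thesis unfolding \<epsilon>_def .
  qed
  have small: "8 * real q * B ^ (2 * q) * \<epsilon> \<le> 1/4"
  proof -
    have "32 * L * real q * B ^ (2 * q) \<le> Q" using N0[OF qN(2)] QL by simp
    then show ?thesis unfolding \<epsilon>_def using Qpos by (simp add: field_simps)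
  qed
  have G: "x \<le> 4 * max (n1 (u (int q + 1), u (int q)))
            (max (n1 (u (2 * int q + 1), u (2 * int q))) (n1 (u (- int q + 1), u (- int q))))"
    unfolding x_def by (rule gordon_main[OF rec WB B1 Wq small])
  have sm: "n1 (u (m + 1), u m) < x / 4" if "\<bar>m\<bar> \<ge> N" "\<bar>m + 1\<bar> \<ge> N" for m
    using N[OF that(1)] N[OF that(2)] by simp
  have "n1 (u (int q + 1), u (int q)) < x / 4" by (rule sm) (use qN in auto)
  moreover have "n1 (u (2 * int q + 1), u (2 * int q)) < x / 4" by (rule sm) (use qN in auto)
  moreover have "n1 (u (- int q + 1), u (- int q)) < x / 4" by (rule sm) (use qN in auto)
  ultimately show False using G by (simp add: max_def split: if_splits)
qed


end
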